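(* For a positive integer $k$ and $\theta>0$, define $g_k(\theta)=\frac{-ke^{-\theta}}{(1-e^{-\theta})^2}+\sum_{j=1}^{k}\frac{j^2e^{-\theta j}}{(1-e^{-\theta j})^2}$. Then $g_k$ is non-positive and increasing in $\theta$ for $\theta>4\ln(2)$. Additionally, $g_k$ is decreasing in $k$. *)

theory Defs
  imports Complex_Main
begin

definition g :: "nat \<Rightarrow> real \<Rightarrow> real" where
  "g k \<theta> = - real k * exp (- \<theta>) / (1 - exp (- \<theta>))\<^sup>2
     + (\<Sum>j=1..k. (real j)\<^sup>2 * exp (- \<theta> * real j) / (1 - exp (- \<theta> * real j))\<^sup>2)"

end

theory Submission
  imports Defs
begin

definition q :: "nat \<Rightarrow> real \<Rightarrow> real" where
  "q j t = (real j)\<^sup>2 * exp (- t * real j) / (1 - exp (- t * real j))\<^sup>2"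

lemma g_q: "g k t = - real k * q 1 t + (\<Sum>j=1..k. q j t)"
  unfolding g_def q_def by simp

lemma q_alg:
  fixes E a t :: real
  assumes "1 - E \<noteq> 0"
  shows "((0 * E + E * (- 1 * a + 0 * - t) * a\<^sup>2) * (1 - E)\<^sup>2 -
      a\<^sup>2 * E * (real 2 * ((0 - E * (- 1 * a + 0 * - t)) * (1 - E) ^ (2 - Suc 0)))) /
     ((1 - E)\<^sup>2 * (1 - E)\<^sup>2) = - (a ^ 3) * E * (1 + E) / (1 - E) ^ 3"
proof -
  define d where "d = 1 - E"
  have d: "d \<noteq> 0" using assms d_def by simp
  have E: "E = 1 - d" using d_def by simp
  show ?thesis unfolding E using d
    by (simp add: field_simps power2_eq_square power3_eq_cube)
qed

lemma q_deriv:
  assumes "t > 0" "j \<ge> 1"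
  shows "(q j has_real_derivative
      (- ((real j)^3) * exp (- t * real j) * (1 + exp (- t * real j)) / (1 - exp (- t * real j))^3)) (at t)"
proof -
  have E: "exp (- t * real j) < 1" using assms by auto
  hence ne: "1 - exp (- t * real j) \<noteq> 0" by linarith
  show ?thesis
    unfolding q_def[abs_def]
    apply (rule derivative_eq_intros refl)+
    using ne apply simp
    using ne by (rule q_alg)
qed

lemma sinh_mult: "t \<ge> 0 \<Longrightarrow> sinh (real j * t) \<ge> real j * sinh (t::real)"
proof (induction j)
  case 0 then show ?case by simp
next
  case (Suc j)
  have "sinh (real (Suc j) * t) = sinh (real j * t) * cosh t + cosh (real j * t) * sinh t"
    by (simp add: distrib_right sinh_add)
  also have "\<dots> \<ge> real j * sinh t + sinh t"
  proof (rule add_mono)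
    have "sinh (real j * t) * cosh t \<ge> sinh (real j * t) * 1"
      using Suc.prems cosh_real_ge_1 by (intro mult_left_mono) auto
    thus "real j * sinh t \<le> sinh (real j * t) * cosh t" using Suc by linarith
    have "cosh (real j * t) * sinh t \<ge> 1 * sinh t"
      using Suc.prems cosh_real_ge_1 by (intro mult_right_mono) auto
    thus "sinh t \<le> cosh (real j * t) * sinh t" by simp
  qed
  finally show ?case by (simp add: distrib_right)
qed

lemma q_sinh:
  assumes t: "t > 0"
  shows "q j t = (real j / (2 * sinh (real j * t / 2)))\<^sup>2"
proof -
  define a where "a = exp (- (real j * t / 2))"
  have a: "a > 0" using a_def by simp
  have e1: "exp (- t * real j) = a * a" unfolding a_def by (simp flip: exp_add)
  have e2: "exp (real j * t / 2) = 1 / a" unfolding a_def by (simp add: exp_minus inverse_eq_divide)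
  have sh: "2 * sinh (real j * t / 2) = 1 / a - a"
    unfolding sinh_def using e2 a_def by (simp add: scaleR_conv_of_real)
  have "1 / a - a = (1 - a * a) / a" using a by (simp add: field_simps)
  then show ?thesis unfolding q_def e1 sh using a
    by (simp add: power2_eq_square field_simps)
qed

lemma q_le_q1:
  assumes t: "t > 0" and j: "j \<ge> 1"
  shows "q j t \<le> q 1 t"
proof -
  have s1: "sinh (t/2) > 0" using t by simp
  have sj: "sinh (real j * t / 2) \<ge> real j * sinh (t / 2)"
    using sinh_mult[of "t/2" j] t by simp
  have "real j / (2 * sinh (real j * t / 2)) \<le> real j / (2 * (real j * sinh (t / 2)))"
    using sj s1 j by (intro divide_left_mono mult_left_mono) auto
  also have "\<dots> = 1 / (2 * sinh (t / 2))" using j by simp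
  finally have le: "real j / (2 * sinh (real j * t / 2)) \<le> 1 / (2 * sinh (t / 2))" .
  have nn: "0 \<le> real j / (2 * sinh (real j * t / 2))" using t by simp
  have "(real j / (2 * sinh (real j * t / 2)))\<^sup>2 \<le> (1 / (2 * sinh (t / 2)))\<^sup>2"
    using le nn by (rule power_mono)
  then show ?thesis using q_sinh[OF t, of j] q_sinh[OF t, of 1] by simp
qed

lemma g_1: "g 1 t = 0" unfolding g_def by simp

lemma g_dec:
  assumes t: "t > 0" and "1 \<le> k" "k \<le> k'"
  shows "g k' t \<le> g k t"
  using assms(3)
proof (induction k' rule: dec_induct)
  case base then show ?case by simp
next
  case (step m)
  have "g (Suc m) t = g m t - q 1 t + q (Suc m) t"
    unfolding g_q by (simp add: algebra_simps)
  also have "\<dots> \<le> g m t" using q_le_q1[OF t, of "Suc m"] by simp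
  finally show ?case using step by simp
qed

lemma pow_bound: "j \<ge> 2 \<Longrightarrow> 2 * j^3 \<le> (16::nat)^(j-1)"
proof (induction j rule: dec_induct)
  case base then show ?case by simp
next
  case (step m)
  have "2 * (Suc m)^3 \<le> 16 * (2 * m^3)"
  proof -
    have "Suc m \<le> 2 * m" using step by simp
    hence "(Suc m)^3 \<le> (2*m)^3" by (rule power_mono) simp
    thus ?thesis by (simp add: power_mult_distrib)
  qed
  also have "\<dots> \<le> 16 * 16^(m-1)" using step by simp
  also have "\<dots> = 16^(Suc m - 1)" using step by (cases m) auto
  finally show ?case .
qed

lemma deriv_term_le:
  fixes E :: real
  assumes E0: "0 < E" and E1: "E < 1/16" and j: "j \<ge> 1"
  shows "real j ^ 3 * E^j * (1 + E^j) / (1 - E^j)^3 \<le> E * (1 + E) / (1 - E)^3"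
proof (cases "j = 1")
  case True then show ?thesis by simp
next
  case False
  hence j2: "j \<ge> 2" using j by simp
  have Ej: "E^j \<le> E" using power_decreasing[of 1 j E] E0 E1 j by simp
  have Ej1: "E^j \<le> 1" using Ej E1 by simp
  have Ejm: "E^(j-1) \<le> (1/16)^(j-1)" using E0 E1 by (intro power_mono) auto
  have pb: "2 * real j ^ 3 \<le> 16^(j-1)" 
  proof -
    have "real (2 * j^3) \<le> real ((16::nat)^(j-1))" using pow_bound[OF j2] by (rule of_nat_mono)
    thus ?thesis by simp
  qed
  have "2 * real j ^ 3 * E^(j-1) \<le> 16^(j-1) * (1/16)^(j-1)"
    using pb Ejm E0 by (intro mult_mono) auto
  also have "\<dots> = (16 * (1/16))^(j-1)" by (rule power_mult_distrib[symmetric])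
  also have "\<dots> = 1" by simp
  finally have key: "2 * real j ^ 3 * E^(j-1) \<le> 1" .
  have EjE: "E^j = E * E^(j-1)" using j by (simp add: power_eq_if)
  have num: "real j ^ 3 * E^j * (1 + E^j) \<le> E * (1 + E)"
  proof -
    have "real j ^ 3 * E^j * (1 + E^j) \<le> real j ^ 3 * E^j * 2"
      using Ej1 E0 by (intro mult_left_mono) auto
    also have "\<dots> = E * (2 * real j ^ 3 * E^(j-1))" unfolding EjE by simp
    also have "\<dots> \<le> E * 1" using key E0 by (intro mult_left_mono) auto
    also have "\<dots> \<le> E * (1 + E)" using E0 by simp
    finally show ?thesis .
  qed
  have den: "(1 - E)^3 \<le> (1 - E^j)^3" using Ej E1 by (intro power_mono) auto
  have dpos: "0 < (1 - E)^3" using E1 by simp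
  show ?thesis
  proof (rule frac_le)
    show "0 \<le> E * (1 + E)" using E0 by simp
  qed (use num den dpos in auto)
qed

lemma g_deriv:
  assumes t: "t > 0"
  shows "(g k has_real_derivative
     (- real k * (- ((real 1)^3) * exp (- t * real 1) * (1 + exp (- t * real 1)) / (1 - exp (- t * real 1))^3)
      + (\<Sum>j=1..k. - ((real j)^3) * exp (- t * real j) * (1 + exp (- t * real j)) / (1 - exp (- t * real j))^3))) (at t)"
proof -
  have "g k = (\<lambda>t. - real k * q 1 t + (\<Sum>j=1..k. q j t))" by (rule ext) (rule g_q)
  moreover have "((\<lambda>t. - real k * q 1 t + (\<Sum>j=1..k. q j t)) has_real_derivative
     (- real k * (- ((real 1)^3) * exp (- t * real 1) * (1 + exp (- t * real 1)) / (1 - exp (- t * real 1))^3)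
      + (\<Sum>j=1..k. - ((real j)^3) * exp (- t * real j) * (1 + exp (- t * real j)) / (1 - exp (- t * real j))^3))) (at t)"
    by (intro DERIV_add DERIV_cmult DERIV_sum q_deriv t) auto
  ultimately show ?thesis by simp
qed

lemma g_deriv_nonneg:
  assumes t: "t > 4 * ln 2" and k: "k \<ge> 1"
  shows "0 \<le> - real k * (- ((real 1)^3) * exp (- t * real 1) * (1 + exp (- t * real 1)) / (1 - exp (- t * real 1))^3)
      + (\<Sum>j=1..k. - ((real j)^3) * exp (- t * real j) * (1 + exp (- t * real j)) / (1 - exp (- t * real j))^3)"
proof -
  define E where "E = exp (- t)"
  have E0: "0 < E" unfolding E_def by simp
  have "exp (4 * ln 2) = (16::real)"
    using exp_of_nat_mult[of 4 "ln (2::real)"] by simp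
  hence "exp (- (4 * ln 2)) = (1/16::real)" by (simp add: exp_minus)
  moreover have "exp (- t) < exp (- (4 * ln 2))" using t by simp
  ultimately have E1: "E < 1/16" unfolding E_def by linarith
  have ej: "exp (- t * real j) = E ^ j" for j
    unfolding E_def using exp_of_nat_mult[of j "-t"] by (simp add: mult.commute)
  have "(\<Sum>j=1..k. real j ^ 3 * E^j * (1 + E^j) / (1 - E^j)^3) \<le> (\<Sum>j=1..k. E * (1 + E) / (1 - E)^3)"
    by (intro sum_mono deriv_term_le E0 E1) auto
  also have "\<dots> = real k * (E * (1 + E) / (1 - E)^3)" by simp
  finally show ?thesis unfolding ej by (simp add: sum_negf)
qed

theorem mainTheorem5:
  shows "(\<forall>k::nat. k \<ge> 1 \<longrightarrow>
            (\<forall>\<theta>::real. \<theta> > 4 * ln 2 \<longrightarrow> g k \<theta> \<le> 0)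
          \<and> mono_on {4 * ln 2 <..} (g k))
       \<and> (\<forall>\<theta>::real. \<theta> > 0 \<longrightarrow>
            (\<forall>k k'::nat. 1 \<le> k \<longrightarrow> k \<le> k' \<longrightarrow> g k' \<theta> \<le> g k \<theta>))"
proof (intro conjI allI impI)
  fix \<theta> :: real and k k' :: nat
  assume "\<theta> > 0" "1 \<le> k" "k \<le> k'"
  then show "g k' \<theta> \<le> g k \<theta>" by (rule g_dec)
next
  fix k :: nat and \<theta> :: real
  assume k: "k \<ge> 1" and t: "\<theta> > 4 * ln 2"
  have "\<theta> > 0" using t ln_gt_zero[of 2] by linarith
  then show "g k \<theta> \<le> 0" using g_dec[of \<theta> 1 k] k g_1 by simp
next
  fix k :: nat
  assume k: "k \<ge> 1"
  show "mono_on {4 * ln 2 <..} (g k)"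
  proof (rule mono_onI)
    fix r s :: real
    assume r: "r \<in> {4 * ln 2 <..}" and s: "s \<in> {4 * ln 2 <..}" and rs: "r \<le> s"
    show "g k r \<le> g k s"
    proof (rule DERIV_nonneg_imp_nondecreasing[OF rs])
      fix x assume x: "r \<le> x" "x \<le> s"
      hence xt: "x > 4 * ln 2" using r by simp
      hence "x > 0" using ln_gt_zero[of 2] by linarith
      then show "\<exists>y. DERIV (g k) x :> y \<and> 0 \<le> y"
        using g_deriv g_deriv_nonneg[OF xt k] by blast
    qed
  qed
qed

end
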